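(* Let $G$ and $H$ be finite graphs such that $H$ fractionally edge-tiles $G$. Let $f(K)$ denote any one of the following for a graph $K$: (a) the number of acyclic orientations of $K$; (b) the number of forests in $K$ (spanning subgraphs without cycles, i.e. edge subsets containing no cycle); (c) the number of matchings in $K$. Then $$f(G)^{1/|E(G)|}\le f(H)^{1/|E(H)|}.$$
   Context: A copy of $H$ in $G$ is a subgraph isomorphic to $H$. $H$ fractionally edge-tiles $G$ means there is a finite list of copies of $H$ in $G$ such that every edge of $G$ belongs to the same number of copies in the list. A matching is a set of pairwise vertex-disjoint edges (the empty set counts). $E(K)$ is the edge set of $K$. *)

theory Defs
  imports Complex_Main
begin

definition graph :: "'a set \<Rightarrow> 'a set set \<Rightarrow> bool" where
  "graph V E \<longleftrightarrow> finite V \<and>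
     (\<forall>e\<in>E. \<exists>u v. e = {u, v} \<and> u \<noteq> v \<and> u \<in> V \<and> v \<in> V)"

definition is_copy :: "'a set \<Rightarrow> 'a set set \<Rightarrow> 'b set \<Rightarrow> 'b set set \<Rightarrow> 'b set \<times> 'b set set \<Rightarrow> bool" where
  "is_copy VH EH VG EG K \<longleftrightarrow>
     fst K \<subseteq> VG \<and> snd K \<subseteq> EG \<and> graph (fst K) (snd K) \<and>
     (\<exists>\<phi>. bij_betw \<phi> VH (fst K) \<and>
          (\<forall>u\<in>VH. \<forall>v\<in>VH. {u, v} \<in> EH \<longleftrightarrow> {\<phi> u, \<phi> v} \<in> snd K))"

definition frac_edge_tiles :: "'a set \<Rightarrow> 'a set set \<Rightarrow> 'b set \<Rightarrow> 'b set set \<Rightarrow> bool" where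
  "frac_edge_tiles VH EH VG EG \<longleftrightarrow>
     (\<exists>Ks. (\<forall>K\<in>set Ks. is_copy VH EH VG EG K) \<and>
           (\<exists>k::nat. k > 0 \<and> (\<forall>e\<in>EG. length (filter (\<lambda>K. e \<in> snd K) Ks) = k)))"

definition orientation :: "'a set set \<Rightarrow> ('a \<times> 'a) set \<Rightarrow> bool" where
  "orientation E D \<longleftrightarrow>
     (\<forall>(u, v)\<in>D. {u, v} \<in> E) \<and>
     (\<forall>u v. {u, v} \<in> E \<longrightarrow> u \<noteq> v \<longrightarrow> ((u, v) \<in> D \<longleftrightarrow> (v, u) \<notin> D))"

definition acyclic_orientations :: "'a set set \<Rightarrow> ('a \<times> 'a) set set" where
  "acyclic_orientations E = {D. orientation E D \<and> (\<forall>x. (x, x) \<notin> D\<^sup>+)}"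

definition has_cycle :: "'a set set \<Rightarrow> bool" where
  "has_cycle F \<longleftrightarrow> (\<exists>vs. length vs \<ge> 3 \<and> distinct vs \<and>
      (\<forall>i < length vs. {vs ! i, vs ! ((i + 1) mod length vs)} \<in> F))"

definition forests :: "'a set set \<Rightarrow> 'a set set set" where
  "forests E = {F. F \<subseteq> E \<and> \<not> has_cycle F}"

definition matchings :: "'a set set \<Rightarrow> 'a set set set" where
  "matchings E = {M. M \<subseteq> E \<and> (\<forall>e\<in>M. \<forall>e'\<in>M. e \<noteq> e' \<longrightarrow> e \<inter> e' = {})}"

end

theory Submission
  imports Defs "HOL-Analysis.Convex"
begin


lemma le_root:
  fixes x Q :: real
  assumes "0 \<le> x" "0 \<le> Q" "k > 0" "x ^ k \<le> Q"
  shows "x \<le> Q powr (1 / real k)"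
proof -
  have "x = (x ^ k) powr (1 / real k)"
    using assms by (simp add: powr_realpow'[symmetric] powr_powr)
  also have "\<dots> \<le> Q powr (1 / real k)"
    using assms by (intro powr_mono2) auto
  finally show ?thesis .
qed

lemma root_le:
  fixes x Q :: real
  assumes "0 \<le> x" "0 \<le> Q" "k > 0" "x \<le> Q powr (1 / real k)"
  shows "x ^ k \<le> Q"
proof -
  have "x ^ k \<le> (Q powr (1 / real k)) ^ k"
    using assms by (intro power_mono) auto
  also have "\<dots> = Q"
    using assms by (simp add: powr_realpow'[symmetric] powr_powr)
  finally show ?thesis .
qed

lemma holder2:
  fixes a b :: "'j \<Rightarrow> real"
  assumes J: "finite J" "card J = k" "k > 0" and nn: "\<forall>j\<in>J. a j \<ge> 0 \<and> b j \<ge> 0"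
  shows "(\<Prod>j\<in>J. a j powr (1/k)) + (\<Prod>j\<in>J. b j powr (1/k)) \<le> (\<Prod>j\<in>J. (a j + b j) powr (1/k))"
proof (cases "\<exists>j\<in>J. a j + b j = 0")
  case True
  then obtain j where j: "j \<in> J" "a j + b j = 0" by blast
  with nn have "a j = 0" "b j = 0" by auto
  then have "(\<Prod>j\<in>J. a j powr (1/k)) = 0" "(\<Prod>j\<in>J. b j powr (1/k)) = 0"
    using j J by (auto intro: prod_zero)
  then show ?thesis by (simp add: prod_nonneg)
next
  case False
  define s where "s j = a j + b j" for j
  have spos: "\<forall>j\<in>J. s j > 0" using False nn unfolding s_def
    by (metis add_nonneg_nonneg order_le_less)
  have Jne: "J \<noteq> {}" using J by auto
  have gm: "(\<Prod>j\<in>J. (c j / s j) powr (1/k)) \<le> (\<Sum>j\<in>J. (c j / s j) / k)"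
    if "\<forall>j\<in>J. c j \<ge> 0" for c :: "'j \<Rightarrow> real"
  proof -
    have "(\<Prod>j\<in>J. (c j / s j)) powr (1 / card J) \<le> (\<Sum>j\<in>J. (c j / s j) / card J)"
      by (rule arith_geom_mean) (use J Jne that spos in \<open>auto intro: divide_nonneg_pos\<close>)
    then show ?thesis using J by (simp add: prod_powr_distrib)
  qed
  have ea: "(\<Prod>j\<in>J. (c j / s j) powr (1/k)) = (\<Prod>j\<in>J. c j powr (1/k)) / (\<Prod>j\<in>J. s j powr (1/k))"
    for c :: "'j \<Rightarrow> real"
    by (simp add: powr_divide prod_dividef)
  have "(\<Sum>j\<in>J. (a j / s j) / k) + (\<Sum>j\<in>J. (b j / s j) / k) = (\<Sum>j\<in>J. 1 / k)"
    unfolding sum.distrib[symmetric]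
    by (rule sum.cong) (use spos in \<open>auto simp: s_def add_divide_distrib[symmetric]\<close>)
  also have "\<dots> = 1" using J by simp
  finally have "(\<Prod>j\<in>J. a j powr (1/k)) / (\<Prod>j\<in>J. s j powr (1/k))
      + (\<Prod>j\<in>J. b j powr (1/k)) / (\<Prod>j\<in>J. s j powr (1/k)) \<le> 1"
    using gm[of a] gm[of b] nn unfolding ea by auto
  moreover have "(\<Prod>j\<in>J. s j powr (1/k)) > 0"
    using spos by (intro prod_pos) auto
  ultimately show ?thesis unfolding s_def
    by (simp add: add_divide_distrib[symmetric] divide_le_eq)
qed

lemma key_step:
  fixes a b :: "'j \<Rightarrow> real" and x y p :: real
  assumes J: "finite J" "card J = k" "k > 0" and nn: "\<forall>j\<in>J. a j \<ge> 0 \<and> b j \<ge> 0"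
    and "p \<ge> 0" "x \<ge> 0" "y \<ge> 0"
    and hx: "x ^ k \<le> p * (\<Prod>j\<in>J. a j)" and hy: "y ^ k \<le> p * (\<Prod>j\<in>J. b j)"
  shows "(x + y) ^ k \<le> p * (\<Prod>j\<in>J. a j + b j)"
proof -
  have pa: "p * (\<Prod>j\<in>J. a j) \<ge> 0" "p * (\<Prod>j\<in>J. b j) \<ge> 0" "p * (\<Prod>j\<in>J. a j + b j) \<ge> 0"
    using assms by (auto intro!: mult_nonneg_nonneg prod_nonneg)
  have "x \<le> p powr (1/k) * (\<Prod>j\<in>J. a j powr (1/k))"
    using le_root[OF _ pa(1) _ hx] assms nn by (simp add: powr_mult prod_powr_distrib prod_nonneg)
  moreover have "y \<le> p powr (1/k) * (\<Prod>j\<in>J. b j powr (1/k))"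
    using le_root[OF _ pa(2) _ hy] assms nn by (simp add: powr_mult prod_powr_distrib prod_nonneg)
  ultimately have "x + y \<le> p powr (1/k) * ((\<Prod>j\<in>J. a j powr (1/k)) + (\<Prod>j\<in>J. b j powr (1/k)))"
    by (simp add: distrib_left)
  also have "\<dots> \<le> p powr (1/k) * (\<Prod>j\<in>J. (a j + b j) powr (1/k))"
    by (intro mult_left_mono holder2 J nn) auto
  also have "\<dots> = (p * (\<Prod>j\<in>J. a j + b j)) powr (1/k)"
    using assms nn by (simp add: powr_mult prod_powr_distrib prod_nonneg)
  finally show ?thesis using root_le[OF _ pa(3)] assms by auto
qed

lemma card_split_filter:
  assumes "finite A"
  shows "card {x\<in>A. P x} + card {x\<in>A. \<not> P x} = card A"
proof -
  have "A = {x\<in>A. P x} \<union> {x\<in>A. \<not> P x}" by auto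
  then have "card A = card ({x\<in>A. P x} \<union> {x\<in>A. \<not> P x})" by simp
  also have "\<dots> = card {x\<in>A. P x} + card {x\<in>A. \<not> P x}"
    by (rule card_Un_disjoint) (use assms in auto)
  finally show ?thesis by simp
qed

lemma shearer:
  fixes S :: "'u set set" and A :: "'j \<Rightarrow> 'u set"
  assumes "finite U" "finite J" "S \<subseteq> Pow U" "\<forall>i\<in>U. card {j\<in>J. i \<in> A j} = k" "k > 0"
  shows "card S ^ k \<le> (\<Prod>j\<in>J. card ((\<lambda>X. X \<inter> A j) ` S))"
  using assms
proof (induction U arbitrary: S rule: finite_induct)
  case empty
  then have "S = {} \<or> S = {{}}" by auto
  then show ?case
  proof
    assume "S = {}" then show ?thesis using empty by (simp add: power_0_left)
  next
    assume "S = {{}}" then show ?thesis by simp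
  qed
next
  case (insert n U)
  define S1 where "S1 = {X\<in>S. n \<in> X}"
  define S0 where "S0 = {X\<in>S. n \<notin> X}"
  define T1 where "T1 = (\<lambda>X. X - {n}) ` S1"
  define P where "P j = (\<lambda>X. X \<inter> A j) ` S" for j
  define J1 where "J1 = {j\<in>J. n \<in> A j}"
  have finU: "finite (insert n U)" using insert by simp
  have finS: "finite S" using insert.prems(2) finU by (meson finite_Pow_iff finite_subset)
  have finP: "finite (P j)" for j using finS unfolding P_def by simp
  have cJ1: "card J1 = k" using insert.prems(3) unfolding J1_def by simp
  have fJ1: "finite J1" using insert.prems(1) unfolding J1_def by simp
  have cnt: "\<forall>i\<in>U. card {j\<in>J. i \<in> A j} = k" using insert.prems(3) by simp
  have T1sub: "T1 \<subseteq> Pow U" using insert.prems(2) unfolding T1_def S1_def by auto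
  have S0sub: "S0 \<subseteq> Pow U" using insert.prems(2) unfolding S0_def by auto
  have IH1: "card T1 ^ k \<le> (\<Prod>j\<in>J. card ((\<lambda>X. X \<inter> A j) ` T1))"
    using insert.IH[OF insert.prems(1) T1sub cnt insert.prems(4)] .
  have IH0: "card S0 ^ k \<le> (\<Prod>j\<in>J. card ((\<lambda>X. X \<inter> A j) ` S0))"
    using insert.IH[OF insert.prems(1) S0sub cnt insert.prems(4)] .
  have cT1: "card T1 = card S1"
    unfolding T1_def by (rule card_image) (auto simp: inj_on_def S1_def)
  have cS: "card S = card S1 + card S0"
    unfolding S1_def S0_def using card_split_filter[OF finS] by simp
  define f1 where "f1 j = (if n \<in> A j then card {Y\<in>P j. n \<in> Y} else card (P j))" for j
  define f0 where "f0 j = (if n \<in> A j then card {Y\<in>P j. n \<notin> Y} else card (P j))" for j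
  have b1: "card ((\<lambda>X. X \<inter> A j) ` T1) \<le> f1 j" for j
  proof (cases "n \<in> A j")
    case True
    have "(\<lambda>X. X \<inter> A j) ` T1 \<subseteq> (\<lambda>Y. Y - {n}) ` {Y\<in>P j. n \<in> Y}"
    proof
      fix Z assume "Z \<in> (\<lambda>X. X \<inter> A j) ` T1"
      then obtain X where X: "X \<in> S1" "Z = (X - {n}) \<inter> A j" unfolding T1_def by auto
      then have "Z = (X \<inter> A j) - {n}" "X \<inter> A j \<in> P j" "n \<in> X \<inter> A j"
        using True unfolding P_def S1_def by auto
      then show "Z \<in> (\<lambda>Y. Y - {n}) ` {Y\<in>P j. n \<in> Y}" by auto
    qed
    then have "card ((\<lambda>X. X \<inter> A j) ` T1) \<le> card ((\<lambda>Y. Y - {n}) ` {Y\<in>P j. n \<in> Y})"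
      by (intro card_mono) (use finP in auto)
    also have "\<dots> \<le> card {Y\<in>P j. n \<in> Y}" by (rule card_image_le) (use finP in auto)
    finally show ?thesis using True unfolding f1_def by simp
  next
    case False
    have "(\<lambda>X. X \<inter> A j) ` T1 \<subseteq> P j"
    proof
      fix Z assume "Z \<in> (\<lambda>X. X \<inter> A j) ` T1"
      then obtain X where X: "X \<in> S1" "Z = (X - {n}) \<inter> A j" unfolding T1_def by auto
      then have "Z = X \<inter> A j" "X \<in> S" using False unfolding S1_def by auto
      then show "Z \<in> P j" unfolding P_def by auto
    qed
    then show ?thesis using False finP unfolding f1_def by (simp add: card_mono)
  qed
  have b0: "card ((\<lambda>X. X \<inter> A j) ` S0) \<le> f0 j" for j
  proof -
    have "(\<lambda>X. X \<inter> A j) ` S0 \<subseteq> {Y\<in>P j. n \<notin> Y}" "(\<lambda>X. X \<inter> A j) ` S0 \<subseteq> P j"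
      unfolding S0_def P_def by auto
    then show ?thesis unfolding f0_def using finP by (auto intro: card_mono)
  qed
  have pr1: "(\<Prod>j\<in>J. card ((\<lambda>X. X \<inter> A j) ` T1)) \<le> (\<Prod>j\<in>J. f1 j)"
    by (intro prod_mono) (use b1 in auto)
  have pr0: "(\<Prod>j\<in>J. card ((\<lambda>X. X \<inter> A j) ` S0)) \<le> (\<Prod>j\<in>J. f0 j)"
    by (intro prod_mono) (use b0 in auto)
  have J1J: "J1 \<subseteq> J" unfolding J1_def by auto
  have split: "(\<Prod>j\<in>J. g j) = (\<Prod>j\<in>J - J1. g j) * (\<Prod>j\<in>J1. g j)" for g :: "'j \<Rightarrow> real"
    using prod.subset_diff[OF J1J insert.prems(1)] .
  define p where "p = (\<Prod>j\<in>J - J1. real (card (P j)))"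
  have e1: "real (\<Prod>j\<in>J. f1 j) = p * (\<Prod>j\<in>J1. real (card {Y\<in>P j. n \<in> Y}))"
    unfolding of_nat_prod split p_def
    by (intro arg_cong2[where f="(*)"] prod.cong) (auto simp: f1_def J1_def)
  have e0: "real (\<Prod>j\<in>J. f0 j) = p * (\<Prod>j\<in>J1. real (card {Y\<in>P j. n \<notin> Y}))"
    unfolding of_nat_prod split p_def
    by (intro arg_cong2[where f="(*)"] prod.cong) (auto simp: f0_def J1_def)
  have "real (card S1) ^ k \<le> p * (\<Prod>j\<in>J1. real (card {Y\<in>P j. n \<in> Y}))"
    unfolding e1[symmetric] cT1[symmetric] using IH1 pr1 by (metis of_nat_le_iff of_nat_power order_trans)
  moreover have "real (card S0) ^ k \<le> p * (\<Prod>j\<in>J1. real (card {Y\<in>P j. n \<notin> Y}))"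
    unfolding e0[symmetric] using IH0 pr0 by (metis of_nat_le_iff of_nat_power order_trans)
  ultimately have "(real (card S1) + real (card S0)) ^ k \<le>
      p * (\<Prod>j\<in>J1. real (card {Y\<in>P j. n \<in> Y}) + real (card {Y\<in>P j. n \<notin> Y}))"
    by (intro key_step[OF fJ1 cJ1 insert.prems(4)]) (auto simp: p_def prod_nonneg)
  also have "\<dots> = p * (\<Prod>j\<in>J1. real (card (P j)))"
    using card_split_filter[OF finP] by (simp flip: of_nat_add)
  also have "\<dots> = (\<Prod>j\<in>J. real (card (P j)))"
    unfolding p_def split ..
  finally have "real (card S ^ k) \<le> real (\<Prod>j\<in>J. card (P j))"
    unfolding cS by simp
  then show ?case unfolding P_def of_nat_le_iff .
qed



lemma graph_edges_sub: "graph V E \<Longrightarrow> e \<in> E \<Longrightarrow> e \<subseteq> V"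
  unfolding graph_def by auto

lemma graph_finite_E: "graph V E \<Longrightarrow> finite E"
  unfolding graph_def by (metis Pow_iff finite_Pow_iff rev_finite_subset subsetI insert_subset empty_subsetI)

lemma inj_on_image_sets:
  assumes "inj_on f C" "\<And>A. A \<in> X \<Longrightarrow> A \<subseteq> C"
  shows "inj_on ((`) f) X"
proof (rule inj_onI)
  fix x y assume "x \<in> X" "y \<in> X" "f ` x = f ` y"
  then show "x = y" using inj_on_image_eq_iff[OF assms(1) assms(2) assms(2)] by blast
qed

lemma matching_transfer:
  assumes inj: "inj_on \<psi> V" and g: "graph V E"
  shows "card (matchings E) \<le> card (matchings ((`) \<psi> ` E))"
proof -
  have sub: "\<And>e. e \<in> E \<Longrightarrow> e \<subseteq> V" using graph_edges_sub[OF g] .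
  have fin: "finite ((`) \<psi> ` E)" using graph_finite_E[OF g] by simp
  have injE: "inj_on ((`) \<psi>) E"
    by (rule inj_on_image_sets[OF inj sub])
  show ?thesis
  proof (rule card_inj_on_le)
    show "inj_on ((`) ((`) \<psi>)) (matchings E)"
      by (rule inj_on_image_sets[OF injE]) (auto simp: matchings_def)
    show "(`) ((`) \<psi>) ` matchings E \<subseteq> matchings ((`) \<psi> ` E)"
    proof
      fix M' assume "M' \<in> (`) ((`) \<psi>) ` matchings E"
      then obtain M where M: "M \<in> matchings E" "M' = (`) \<psi> ` M" by auto
      have "\<psi> ` e \<inter> \<psi> ` e' = {}" if "e \<in> M" "e' \<in> M" "\<psi> ` e \<noteq> \<psi> ` e'" for e e'
      proof -
        have "e \<noteq> e'" using that by auto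
        then have "e \<inter> e' = {}" using M that unfolding matchings_def by auto
        moreover have ev: "e \<subseteq> V" "e' \<subseteq> V" using M that sub unfolding matchings_def by auto
        ultimately have "\<psi> ` (e \<inter> e') = \<psi> ` e \<inter> \<psi> ` e'" using inj_on_image_Int[OF inj ev] by simp
        then show ?thesis using \<open>e \<inter> e' = {}\<close> by simp
      qed
      then show "M' \<in> matchings ((`) \<psi> ` E)" using M unfolding matchings_def by auto
    qed
    have "matchings ((`) \<psi> ` E) \<subseteq> Pow ((`) \<psi> ` E)" by (auto simp: matchings_def)
    then show "finite (matchings ((`) \<psi> ` E))"
      using fin by (meson finite_Pow_iff finite_subset)
  qed
qed

lemma cycle_transfer:
  assumes inj: "inj_on \<psi> V" and sub: "\<And>e. e \<in> F \<Longrightarrow> e \<subseteq> V"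
    and hc: "has_cycle ((`) \<psi> ` F)"
  shows "has_cycle F"
proof -
  obtain vs where vs: "length vs \<ge> 3" "distinct vs"
    "\<forall>i < length vs. {vs ! i, vs ! ((i + 1) mod length vs)} \<in> (`) \<psi> ` F"
    using hc unfolding has_cycle_def by blast
  define g where "g = inv_into V \<psi>"
  define ws where "ws = map g vs"
  have inV: "set vs \<subseteq> \<psi> ` V"
  proof
    fix x assume "x \<in> set vs"
    then obtain i where i: "i < length vs" "x = vs ! i" by (auto simp: in_set_conv_nth)
    then obtain e where "e \<in> F" "{vs ! i, vs ! ((i + 1) mod length vs)} = \<psi> ` e" using vs by blast
    then show "x \<in> \<psi> ` V" using i sub by blast
  qed
  have "distinct ws" unfolding ws_def g_def
    using vs(2) inj_on_inv_into[OF inV] by (simp add: distinct_map)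
  moreover have "\<forall>i < length ws. {ws ! i, ws ! ((i + 1) mod length ws)} \<in> F"
  proof (intro allI impI)
    fix i assume i: "i < length ws"
    then have i': "i < length vs" unfolding ws_def by simp
    then obtain e where e: "e \<in> F" "{vs ! i, vs ! ((i + 1) mod length vs)} = \<psi> ` e" using vs by blast
    have "g ` (\<psi> ` e) = e" unfolding g_def using inv_into_image_cancel[OF inj sub[OF e(1)]] .
    moreover have "(i + 1) mod length vs < length vs" using i' by (intro mod_less_divisor) auto
    ultimately have "{ws ! i, ws ! ((i + 1) mod length ws)} = e"
      using e i' unfolding ws_def by (metis image_empty image_insert length_map nth_map)
    then show "{ws ! i, ws ! ((i + 1) mod length ws)} \<in> F" using e by simp
  qed
  moreover have "length ws \<ge> 3" using vs unfolding ws_def by simp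
  ultimately show ?thesis unfolding has_cycle_def by blast
qed

lemma forest_transfer:
  assumes inj: "inj_on \<psi> V" and g: "graph V E"
  shows "card (forests E) \<le> card (forests ((`) \<psi> ` E))"
proof -
  have sub: "\<And>e. e \<in> E \<Longrightarrow> e \<subseteq> V" using graph_edges_sub[OF g] .
  have fin: "finite ((`) \<psi> ` E)" using graph_finite_E[OF g] by simp
  have injE: "inj_on ((`) \<psi>) E"
    by (rule inj_on_image_sets[OF inj sub])
  show ?thesis
  proof (rule card_inj_on_le)
    show "inj_on ((`) ((`) \<psi>)) (forests E)"
      by (rule inj_on_image_sets[OF injE]) (auto simp: forests_def)
    show "(`) ((`) \<psi>) ` forests E \<subseteq> forests ((`) \<psi> ` E)"
    proof
      fix M' assume "M' \<in> (`) ((`) \<psi>) ` forests E"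
      then obtain M where M: "M \<in> forests E" "M' = (`) \<psi> ` M" by auto
      have "\<not> has_cycle M'"
        using cycle_transfer[OF inj, of M] M sub unfolding forests_def by blast
      then show "M' \<in> forests ((`) \<psi> ` E)" using M unfolding forests_def by auto
    qed
    have "forests ((`) \<psi> ` E) \<subseteq> Pow ((`) \<psi> ` E)" by (auto simp: forests_def)
    then show "finite (forests ((`) \<psi> ` E))"
      using fin by (meson finite_Pow_iff finite_subset)
  qed
qed

lemma orientation_sub:
  assumes "orientation E D" "\<And>e. e \<in> E \<Longrightarrow> e \<subseteq> W"
  shows "D \<subseteq> W \<times> W"
proof
  fix p assume p: "p \<in> D"
  obtain u v where uv: "p = (u, v)" by (cases p)
  have "{u, v} \<in> E" using assms(1) p uv unfolding orientation_def by auto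
  then have "{u, v} \<subseteq> W" by (rule assms(2))
  then show "p \<in> W \<times> W" using uv by simp
qed

lemma ao_transfer:
  assumes inj: "inj_on \<psi> V" and g: "graph V E"
  shows "card (acyclic_orientations E) \<le> card (acyclic_orientations ((`) \<psi> ` E))"
proof -
  have sub: "\<And>e. e \<in> E \<Longrightarrow> e \<subseteq> V" using graph_edges_sub[OF g] .
  have finV: "finite V" using g unfolding graph_def by simp
  define h where "h = map_prod \<psi> \<psi>"
  define ig where "ig = inv_into V \<psi>"
  have injh: "inj_on h (V \<times> V)" unfolding h_def using map_prod_inj_on[OF inj inj] .
  have Dsub: "D \<subseteq> V \<times> V" if "D \<in> acyclic_orientations E" for D
    using orientation_sub[of E D V] that sub unfolding acyclic_orientations_def by blast
  have memh: "(\<psi> u, \<psi> v) \<in> h ` D \<longleftrightarrow> (u, v) \<in> D" if "D \<subseteq> V \<times> V" "u \<in> V" "v \<in> V" for D u v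
  proof
    assume "(\<psi> u, \<psi> v) \<in> h ` D"
    then obtain u' v' where "(u', v') \<in> D" "\<psi> u' = \<psi> u" "\<psi> v' = \<psi> v" unfolding h_def by auto
    moreover have "u' \<in> V" "v' \<in> V" using calculation(1) that by auto
    ultimately have "u' = u" "v' = v" using inj that unfolding inj_on_def by auto
    then show "(u, v) \<in> D" using \<open>(u', v') \<in> D\<close> by simp
  qed (auto simp: h_def)
  show ?thesis
  proof (rule card_inj_on_le)
    show "inj_on ((`) h) (acyclic_orientations E)"
      by (rule inj_on_image_sets[OF injh Dsub])
    show "(`) h ` acyclic_orientations E \<subseteq> acyclic_orientations ((`) \<psi> ` E)"
    proof
      fix D' assume "D' \<in> (`) h ` acyclic_orientations E"
      then obtain D where D: "D \<in> acyclic_orientations E" "D' = h ` D" by auto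
      have DV: "D \<subseteq> V \<times> V" using Dsub[OF D(1)] .
      have or: "orientation E D" and ac: "\<forall>x. (x, x) \<notin> D\<^sup>+"
        using D(1) unfolding acyclic_orientations_def by auto
      have o1: "\<forall>(a, b)\<in>D'. {a, b} \<in> (`) \<psi> ` E"
      proof (intro ballI, clarify)
        fix a b assume "(a, b) \<in> D'"
        then obtain u v where "(u, v) \<in> D" "a = \<psi> u" "b = \<psi> v" using D unfolding h_def by auto
        moreover have "{u, v} \<in> E" using or calculation(1) unfolding orientation_def by auto
        ultimately have "{a, b} = \<psi> ` {u, v}" "{u, v} \<in> E" by simp_all
        then show "{a, b} \<in> (`) \<psi> ` E" by (intro rev_image_eqI) 
      qed
      have o2: "(a, b) \<in> D' \<longleftrightarrow> (b, a) \<notin> D'" if "{a, b} \<in> (`) \<psi> ` E" "a \<noteq> b" for a b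
      proof -
        from that(1) obtain e where e: "e \<in> E" "{a, b} = \<psi> ` e" by (rule imageE) simp
        obtain u v where uv: "e = {u, v}" "u \<noteq> v" "u \<in> V" "v \<in> V"
          using g e(1) unfolding graph_def by blast
        have ee: "{a, b} = {\<psi> u, \<psi> v}" using e uv by simp
        have r: "(u, v) \<in> D \<longleftrightarrow> (v, u) \<notin> D" using or e(1) uv unfolding orientation_def by auto
        from ee have "(a = \<psi> u \<and> b = \<psi> v) \<or> (a = \<psi> v \<and> b = \<psi> u)" by (auto simp: doubleton_eq_iff)
        then show ?thesis
        proof -
          have m1: "(\<psi> u, \<psi> v) \<in> D' \<longleftrightarrow> (u, v) \<in> D" using memh[OF DV uv(3) uv(4)] D(2) by simp
          have m2: "(\<psi> v, \<psi> u) \<in> D' \<longleftrightarrow> (v, u) \<in> D" using memh[OF DV uv(4) uv(3)] D(2) by simp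
          from \<open>(a = \<psi> u \<and> b = \<psi> v) \<or> (a = \<psi> v \<and> b = \<psi> u)\<close> show ?thesis
            using m1 m2 r by blast
        qed
      qed
      have tr: "(a, b) \<in> D'\<^sup>+ \<Longrightarrow> (ig a, ig b) \<in> D\<^sup>+" for a b
      proof (induction rule: trancl_induct)
        case (base y)
        then obtain u v where "(u, v) \<in> D" "a = \<psi> u" "y = \<psi> v" using D unfolding h_def by auto
        moreover have "u \<in> V" "v \<in> V" using DV calculation(1) by auto
        ultimately show ?case unfolding ig_def using inj by (simp add: inv_into_f_f)
      next
        case (step y z)
        then obtain u v where "(u, v) \<in> D" "y = \<psi> u" "z = \<psi> v" using D unfolding h_def by auto
        moreover have "u \<in> V" "v \<in> V" using DV calculation(1) by auto
        ultimately have yz: "(ig y, ig z) \<in> D" unfolding ig_def using inj by (simp add: inv_into_f_f)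
        show ?case by (rule trancl_into_trancl[OF step.IH yz])
      qed
      have acy: "\<forall>x. (x, x) \<notin> D'\<^sup>+" using tr ac by blast
      have "orientation ((`) \<psi> ` E) D'"
        unfolding orientation_def
      proof (intro conjI allI impI)
        show "\<forall>(a, b)\<in>D'. {a, b} \<in> (`) \<psi> ` E" by (rule o1)
      next
        fix a b assume "{a, b} \<in> (`) \<psi> ` E" "a \<noteq> b"
        then show "(a, b) \<in> D' \<longleftrightarrow> (b, a) \<notin> D'" by (rule o2)
      qed
      then show "D' \<in> acyclic_orientations ((`) \<psi> ` E)"
        unfolding acyclic_orientations_def using acy by simp
    qed
    have fW: "finite (\<psi> ` V \<times> \<psi> ` V)" using finV by simp
    have "acyclic_orientations ((`) \<psi> ` E) \<subseteq> Pow (\<psi> ` V \<times> \<psi> ` V)"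
    proof
      fix D assume "D \<in> acyclic_orientations ((`) \<psi> ` E)"
      then have "orientation ((`) \<psi> ` E) D" unfolding acyclic_orientations_def by simp
      then have "D \<subseteq> \<psi> ` V \<times> \<psi> ` V" by (rule orientation_sub) (use sub in auto)
      then show "D \<in> Pow (\<psi> ` V \<times> \<psi> ` V)" by simp
    qed
    then show "finite (acyclic_orientations ((`) \<psi> ` E))"
      using fW by (meson finite_Pow_iff finite_subset)
  qed
qed



lemma copy_edges:
  assumes c: "is_copy VH EH VG EG K" and gH: "graph VH EH"
  obtains \<psi> where "inj_on \<psi> (fst K)" "EH = (`) \<psi> ` snd K"
proof -
  obtain \<phi> where bij: "bij_betw \<phi> VH (fst K)"
    and iso: "\<forall>u\<in>VH. \<forall>v\<in>VH. {u, v} \<in> EH \<longleftrightarrow> {\<phi> u, \<phi> v} \<in> snd K"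
    using c unfolding is_copy_def by blast
  have gK: "graph (fst K) (snd K)" using c unfolding is_copy_def by blast
  define \<psi> where "\<psi> = inv_into VH \<phi>"
  have injphi: "inj_on \<phi> VH" using bij by (simp add: bij_betw_def)
  have imphi: "\<phi> ` VH = fst K" using bij by (simp add: bij_betw_def)
  have bpsi: "bij_betw \<psi> (fst K) VH" unfolding \<psi>_def by (rule bij_betw_inv_into[OF bij])
  have psiphi: "\<psi> (\<phi> u) = u" if "u \<in> VH" for u
    unfolding \<psi>_def using inv_into_f_f[OF injphi that] .
  have phipsi: "\<phi> (\<psi> a) = a" if "a \<in> fst K" for a
    unfolding \<psi>_def using f_inv_into_f[of a \<phi> VH] that imphi by simp
  have psiV: "\<psi> a \<in> VH" if "a \<in> fst K" for a
    using bpsi that by (meson bij_betwE)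
  have "EH = (`) \<psi> ` snd K"
  proof
    show "EH \<subseteq> (`) \<psi> ` snd K"
    proof
      fix e assume e: "e \<in> EH"
      then obtain u v where uv: "e = {u, v}" "u \<in> VH" "v \<in> VH"
        using gH unfolding graph_def by blast
      have "{\<phi> u, \<phi> v} \<in> snd K" using iso uv e by blast
      moreover have "e = \<psi> ` {\<phi> u, \<phi> v}" using uv psiphi by simp
      ultimately show "e \<in> (`) \<psi> ` snd K" by (intro rev_image_eqI)
    qed
  next
    show "(`) \<psi> ` snd K \<subseteq> EH"
    proof
      fix e assume "e \<in> (`) \<psi> ` snd K"
      then obtain e' where e': "e' \<in> snd K" "e = \<psi> ` e'" by (rule imageE) simp
      then obtain a b where ab: "e' = {a, b}" "a \<in> fst K" "b \<in> fst K"
        using gK unfolding graph_def by blast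
      have "{\<phi> (\<psi> a), \<phi> (\<psi> b)} \<in> snd K" using ab e' phipsi by simp
      then have "{\<psi> a, \<psi> b} \<in> EH" using iso psiV ab by blast
      then show "e \<in> EH" using e' ab by simp
    qed
  qed
  moreover have "inj_on \<psi> (fst K)" using bpsi by (simp add: bij_betw_def)
  ultimately show ?thesis using that by blast
qed

lemma copy_card_edges:
  assumes c: "is_copy VH EH VG EG K" and gH: "graph VH EH"
  shows "card (snd K) = card EH"
proof -
  obtain \<psi> where inj: "inj_on \<psi> (fst K)" and eq: "EH = (`) \<psi> ` snd K"
    using copy_edges[OF c gH] .
  have gK: "graph (fst K) (snd K)" using c unfolding is_copy_def by blast
  have "inj_on ((`) \<psi>) (snd K)"
    by (rule inj_on_image_sets[OF inj]) (rule graph_edges_sub[OF gK])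
  then show ?thesis unfolding eq by (simp add: card_image)
qed

lemma copy_counts:
  assumes c: "is_copy VH EH VG EG K" and gH: "graph VH EH"
  shows "card (matchings (snd K)) \<le> card (matchings EH)"
    "card (forests (snd K)) \<le> card (forests EH)"
    "card (acyclic_orientations (snd K)) \<le> card (acyclic_orientations EH)"
proof -
  obtain \<psi> where inj: "inj_on \<psi> (fst K)" and eq: "EH = (`) \<psi> ` snd K"
    using copy_edges[OF c gH] .
  have gK: "graph (fst K) (snd K)" using c unfolding is_copy_def by blast
  show "card (matchings (snd K)) \<le> card (matchings EH)"
    unfolding eq by (rule matching_transfer[OF inj gK])
  show "card (forests (snd K)) \<le> card (forests EH)"
    unfolding eq by (rule forest_transfer[OF inj gK])
  show "card (acyclic_orientations (snd K)) \<le> card (acyclic_orientations EH)"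
    unfolding eq by (rule ao_transfer[OF inj gK])
qed

lemma fin_ao:
  assumes g: "graph V E"
  shows "finite (acyclic_orientations E)"
proof -
  have finV: "finite V" using g unfolding graph_def by simp
  have "acyclic_orientations E \<subseteq> Pow (V \<times> V)"
  proof
    fix D assume "D \<in> acyclic_orientations E"
    then have "orientation E D" unfolding acyclic_orientations_def by simp
    then have "D \<subseteq> V \<times> V" by (rule orientation_sub) (rule graph_edges_sub[OF g])
    then show "D \<in> Pow (V \<times> V)" by simp
  qed
  then show ?thesis using finV by (meson finite_Pow_iff finite_SigmaI finite_subset)
qed

lemma ao_exists:
  assumes g: "graph V E"
  shows "acyclic_orientations E \<noteq> {}"
proof -
  have finV: "finite V" using g unfolding graph_def by simp
  obtain f :: "_ \<Rightarrow> nat" and n where f: "inj_on f V" using finite_imp_inj_to_nat_seg[OF finV] by blast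
  define D where "D = {(u, v). {u, v} \<in> E \<and> f u < f v}"
  have lt: "(x, y) \<in> D\<^sup>+ \<Longrightarrow> f x < f y" for x y
    by (induction rule: trancl_induct) (auto simp: D_def)
  have "orientation E D" unfolding orientation_def
  proof (intro conjI allI impI)
    show "\<forall>(u, v)\<in>D. {u, v} \<in> E" unfolding D_def by auto
  next
    fix u v assume uv: "{u, v} \<in> E" "u \<noteq> v"
    have "{u, v} \<subseteq> V" using graph_edges_sub[OF g uv(1)] .
    then have "f u \<noteq> f v" using f uv(2) unfolding inj_on_def by auto
    moreover have "{v, u} \<in> E" using uv(1) by (simp add: insert_commute)
    ultimately show "(u, v) \<in> D \<longleftrightarrow> (v, u) \<notin> D" using uv(1) unfolding D_def by auto
  qed
  moreover have "\<forall>x. (x, x) \<notin> D\<^sup>+" using lt by blast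
  ultimately have "D \<in> acyclic_orientations E" unfolding acyclic_orientations_def by simp
  then show ?thesis by blast
qed

lemma final_ineq:
  fixes a b k m nE nH :: nat
  assumes "k > 0" "a ^ k \<le> b ^ m" "k * nE = m * nH" "b \<ge> 1"
  shows "real a powr (1 / real nE) \<le> real b powr (1 / real nH)"
proof (cases "nE = 0")
  case True
  have "real a powr (1 / real nE) \<le> 1" using True by simp
  also have "1 \<le> real b powr (1 / real nH)" using assms(4) by (intro ge_one_powr_ge_zero) auto
  finally show ?thesis .
next
  case False
  then have "m * nH > 0" using assms(1,3) by (metis mult_pos_pos not_gr_zero)
  then have m0: "m > 0" and nH0: "nH > 0" by auto
  have "real a powr (1 / real nE) = (real a ^ k) powr (1 / (real k * real nE))"
    using assms(1) False by (simp add: powr_realpow'[symmetric] powr_powr)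
  also have "\<dots> \<le> (real b ^ m) powr (1 / (real k * real nE))"
    using assms(2) by (intro powr_mono2) (auto simp flip: of_nat_power)
  also have "\<dots> = real b powr (real m / (real k * real nE))"
    using m0 by (simp add: powr_realpow'[symmetric] powr_powr)
  also have "real m / (real k * real nE) = 1 / real nH"
  proof -
    have "real k * real nE = real m * real nH" using assms(3) by (simp flip: of_nat_mult)
    then show ?thesis using m0 nH0 by (simp add: field_simps)
  qed
  finally show ?thesis .
qed



lemma shearer_bound:
  fixes S :: "'u set set" and A :: "'j \<Rightarrow> 'u set"
  assumes "finite U" "finite J" "S \<subseteq> Pow U" "\<forall>i\<in>U. card {j\<in>J. i \<in> A j} = k" "k > 0"
    and b: "\<forall>j\<in>J. card ((\<lambda>X. X \<inter> A j) ` S) \<le> c"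
  shows "card S ^ k \<le> c ^ card J"
proof -
  have "card S ^ k \<le> (\<Prod>j\<in>J. card ((\<lambda>X. X \<inter> A j) ` S))" by (rule shearer[OF assms(1-5)])
  also have "\<dots> \<le> (\<Prod>j\<in>J. c)" by (intro prod_mono) (use b in auto)
  also have "\<dots> = c ^ card J" by simp
  finally show ?thesis .
qed

lemma has_cycle_mono: "has_cycle F \<Longrightarrow> F \<subseteq> F' \<Longrightarrow> has_cycle F'"
  unfolding has_cycle_def by blast

lemma tile_dc:
  fixes VG :: "'b set" and EG :: "'b set set" and VH :: "'a set" and EH :: "'a set set"
    and Ks :: "('b set \<times> 'b set set) list"
  assumes gG: "graph VG EG" and gH: "graph VH EH"
    and copies: "\<forall>K\<in>set Ks. is_copy VH EH VG EG K" and k0: "k > 0"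
    and cnt0: "\<forall>e\<in>EG. length (filter (\<lambda>K. e \<in> snd K) Ks) = k"
  shows "k * card EG = length Ks * card EH"
proof -
  define m where "m = length Ks"
  define J where "J = {..<m}"
  define EK where "EK j = snd (Ks ! j)" for j
  have finJ: "finite J" and cJ: "card J = m" unfolding J_def by auto
  have cp: "is_copy VH EH VG EG (Ks ! j)" if "j \<in> J" for j
    using copies that unfolding J_def m_def by simp
  have cnt: "\<forall>e\<in>EG. card {j\<in>J. e \<in> EK j} = k"
  proof
    fix e assume e: "e \<in> EG"
    have "{j\<in>J. e \<in> EK j} = {i. i < length Ks \<and> e \<in> snd (Ks ! i)}"
      unfolding J_def EK_def m_def by auto
    then show "card {j\<in>J. e \<in> EK j} = k" using cnt0 e by (simp add: length_filter_conv_card)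
  qed
  have EKsub: "EK j \<subseteq> EG" if "j \<in> J" for j
    using cp[OF that] unfolding is_copy_def EK_def by blast
  have gK: "graph (fst (Ks ! j)) (EK j)" if "j \<in> J" for j
    using cp[OF that] unfolding is_copy_def EK_def by blast
  have finEG: "finite EG" using graph_finite_E[OF gG] .
  have finEK: "finite (EK j)" if "j \<in> J" for j using EKsub[OF that] finEG by (rule finite_subset)
  have cEK: "card (EK j) = card EH" if "j \<in> J" for j
    unfolding EK_def using copy_card_edges[OF cp[OF that] gH] .
  have R: "k * card EG = m * card EH"
  proof -
    have "(\<Sum>e\<in>EG. card {j\<in>J. e \<in> EK j}) = (\<Sum>j\<in>J. card {e\<in>EG. e \<in> EK j})"
      using sum.swap_restrict[OF finEG finJ, of "\<lambda>_ _. (1::nat)" "\<lambda>e j. e \<in> EK j"]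
      by (simp flip: card_eq_sum)
    also have "\<dots> = (\<Sum>j\<in>J. card EH)"
    proof (rule sum.cong)
      fix j assume j: "j \<in> J"
      have "{e\<in>EG. e \<in> EK j} = EK j" using EKsub[OF j] by auto
      then show "card {e\<in>EG. e \<in> EK j} = card EH" using cEK[OF j] by simp
    qed simp
    finally have "(\<Sum>e\<in>EG. k) = (\<Sum>j\<in>J. card EH)" using cnt by simp
    then show ?thesis using cJ by (simp add: mult.commute)
  qed
  show ?thesis using R by (simp add: m_def)
qed

lemma tile_m:
  fixes VG :: "'b set" and EG :: "'b set set" and VH :: "'a set" and EH :: "'a set set"
    and Ks :: "('b set \<times> 'b set set) list"
  assumes gG: "graph VG EG" and gH: "graph VH EH"
    and copies: "\<forall>K\<in>set Ks. is_copy VH EH VG EG K" and k0: "k > 0"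
    and cnt0: "\<forall>e\<in>EG. length (filter (\<lambda>K. e \<in> snd K) Ks) = k"
  shows "card (matchings EG) ^ k \<le> card (matchings EH) ^ length Ks"
proof -
  define m where "m = length Ks"
  define J where "J = {..<m}"
  define EK where "EK j = snd (Ks ! j)" for j
  have finJ: "finite J" and cJ: "card J = m" unfolding J_def by auto
  have cp: "is_copy VH EH VG EG (Ks ! j)" if "j \<in> J" for j
    using copies that unfolding J_def m_def by simp
  have cnt: "\<forall>e\<in>EG. card {j\<in>J. e \<in> EK j} = k"
  proof
    fix e assume e: "e \<in> EG"
    have "{j\<in>J. e \<in> EK j} = {i. i < length Ks \<and> e \<in> snd (Ks ! i)}"
      unfolding J_def EK_def m_def by auto
    then show "card {j\<in>J. e \<in> EK j} = k" using cnt0 e by (simp add: length_filter_conv_card)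
  qed
  have EKsub: "EK j \<subseteq> EG" if "j \<in> J" for j
    using cp[OF that] unfolding is_copy_def EK_def by blast
  have gK: "graph (fst (Ks ! j)) (EK j)" if "j \<in> J" for j
    using cp[OF that] unfolding is_copy_def EK_def by blast
  have finEG: "finite EG" using graph_finite_E[OF gG] .
  have finEK: "finite (EK j)" if "j \<in> J" for j using EKsub[OF that] finEG by (rule finite_subset)
  have cEK: "card (EK j) = card EH" if "j \<in> J" for j
    unfolding EK_def using copy_card_edges[OF cp[OF that] gH] .
  have R: "card (matchings EG) ^ k \<le> card (matchings EH) ^ m"
  proof -
    have "card (matchings EG) ^ k \<le> card (matchings EH) ^ card J"
    proof (rule shearer_bound[OF finEG finJ _ cnt k0])
      show "matchings EG \<subseteq> Pow EG" unfolding matchings_def by auto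
      show "\<forall>j\<in>J. card ((\<lambda>X. X \<inter> EK j) ` matchings EG) \<le> card (matchings EH)"
      proof
        fix j assume j: "j \<in> J"
        have "(\<lambda>X. X \<inter> EK j) ` matchings EG \<subseteq> matchings (EK j)"
          unfolding matchings_def by auto
        moreover have "finite (matchings (EK j))"
        proof -
          have "matchings (EK j) \<subseteq> Pow (EK j)" unfolding matchings_def by auto
          then show ?thesis using finEK[OF j] by (meson finite_Pow_iff finite_subset)
        qed
        ultimately have "card ((\<lambda>X. X \<inter> EK j) ` matchings EG) \<le> card (matchings (EK j))"
          by (rule card_mono[rotated])
        also have "\<dots> \<le> card (matchings EH)"
          unfolding EK_def by (rule copy_counts(1)[OF cp[OF j] gH])
        finally show "card ((\<lambda>X. X \<inter> EK j) ` matchings EG) \<le> card (matchings EH)" .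
      qed
    qed
    then show ?thesis using cJ by simp
  qed
  show ?thesis using R by (simp add: m_def)
qed

lemma tile_f:
  fixes VG :: "'b set" and EG :: "'b set set" and VH :: "'a set" and EH :: "'a set set"
    and Ks :: "('b set \<times> 'b set set) list"
  assumes gG: "graph VG EG" and gH: "graph VH EH"
    and copies: "\<forall>K\<in>set Ks. is_copy VH EH VG EG K" and k0: "k > 0"
    and cnt0: "\<forall>e\<in>EG. length (filter (\<lambda>K. e \<in> snd K) Ks) = k"
  shows "card (forests EG) ^ k \<le> card (forests EH) ^ length Ks"
proof -
  define m where "m = length Ks"
  define J where "J = {..<m}"
  define EK where "EK j = snd (Ks ! j)" for j
  have finJ: "finite J" and cJ: "card J = m" unfolding J_def by auto
  have cp: "is_copy VH EH VG EG (Ks ! j)" if "j \<in> J" for j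
    using copies that unfolding J_def m_def by simp
  have cnt: "\<forall>e\<in>EG. card {j\<in>J. e \<in> EK j} = k"
  proof
    fix e assume e: "e \<in> EG"
    have "{j\<in>J. e \<in> EK j} = {i. i < length Ks \<and> e \<in> snd (Ks ! i)}"
      unfolding J_def EK_def m_def by auto
    then show "card {j\<in>J. e \<in> EK j} = k" using cnt0 e by (simp add: length_filter_conv_card)
  qed
  have EKsub: "EK j \<subseteq> EG" if "j \<in> J" for j
    using cp[OF that] unfolding is_copy_def EK_def by blast
  have gK: "graph (fst (Ks ! j)) (EK j)" if "j \<in> J" for j
    using cp[OF that] unfolding is_copy_def EK_def by blast
  have finEG: "finite EG" using graph_finite_E[OF gG] .
  have finEK: "finite (EK j)" if "j \<in> J" for j using EKsub[OF that] finEG by (rule finite_subset)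
  have cEK: "card (EK j) = card EH" if "j \<in> J" for j
    unfolding EK_def using copy_card_edges[OF cp[OF that] gH] .
  have R: "card (forests EG) ^ k \<le> card (forests EH) ^ m"
  proof -
    have "card (forests EG) ^ k \<le> card (forests EH) ^ card J"
    proof (rule shearer_bound[OF finEG finJ _ cnt k0])
      show "forests EG \<subseteq> Pow EG" unfolding forests_def by auto
      show "\<forall>j\<in>J. card ((\<lambda>X. X \<inter> EK j) ` forests EG) \<le> card (forests EH)"
      proof
        fix j assume j: "j \<in> J"
        have "(\<lambda>X. X \<inter> EK j) ` forests EG \<subseteq> forests (EK j)"
        proof
          fix Y assume "Y \<in> (\<lambda>X. X \<inter> EK j) ` forests EG"
          then obtain X where X: "X \<in> forests EG" "Y = X \<inter> EK j" by blast
          have "\<not> has_cycle Y"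
          proof
            assume "has_cycle Y"
            then have "has_cycle X" by (rule has_cycle_mono) (use X in auto)
            then show False using X unfolding forests_def by simp
          qed
          then show "Y \<in> forests (EK j)" using X unfolding forests_def by simp
        qed
        moreover have "finite (forests (EK j))"
        proof -
          have "forests (EK j) \<subseteq> Pow (EK j)" unfolding forests_def by auto
          then show ?thesis using finEK[OF j] by (meson finite_Pow_iff finite_subset)
        qed
        ultimately have "card ((\<lambda>X. X \<inter> EK j) ` forests EG) \<le> card (forests (EK j))"
          by (rule card_mono[rotated])
        also have "\<dots> \<le> card (forests EH)"
          unfolding EK_def by (rule copy_counts(2)[OF cp[OF j] gH])
        finally show "card ((\<lambda>X. X \<inter> EK j) ` forests EG) \<le> card (forests EH)" .
      qed
    qed
    then show ?thesis using cJ by simp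
  qed
  show ?thesis using R by (simp add: m_def)
qed

lemma tile_a:
  fixes VG :: "'b set" and EG :: "'b set set" and VH :: "'a set" and EH :: "'a set set"
    and Ks :: "('b set \<times> 'b set set) list"
  assumes gG: "graph VG EG" and gH: "graph VH EH"
    and copies: "\<forall>K\<in>set Ks. is_copy VH EH VG EG K" and k0: "k > 0"
    and cnt0: "\<forall>e\<in>EG. length (filter (\<lambda>K. e \<in> snd K) Ks) = k"
  shows "card (acyclic_orientations EG) ^ k \<le> card (acyclic_orientations EH) ^ length Ks"
proof -
  define m where "m = length Ks"
  define J where "J = {..<m}"
  define EK where "EK j = snd (Ks ! j)" for j
  have finJ: "finite J" and cJ: "card J = m" unfolding J_def by auto
  have cp: "is_copy VH EH VG EG (Ks ! j)" if "j \<in> J" for j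
    using copies that unfolding J_def m_def by simp
  have cnt: "\<forall>e\<in>EG. card {j\<in>J. e \<in> EK j} = k"
  proof
    fix e assume e: "e \<in> EG"
    have "{j\<in>J. e \<in> EK j} = {i. i < length Ks \<and> e \<in> snd (Ks ! i)}"
      unfolding J_def EK_def m_def by auto
    then show "card {j\<in>J. e \<in> EK j} = k" using cnt0 e by (simp add: length_filter_conv_card)
  qed
  have EKsub: "EK j \<subseteq> EG" if "j \<in> J" for j
    using cp[OF that] unfolding is_copy_def EK_def by blast
  have gK: "graph (fst (Ks ! j)) (EK j)" if "j \<in> J" for j
    using cp[OF that] unfolding is_copy_def EK_def by blast
  have finEG: "finite EG" using graph_finite_E[OF gG] .
  have finEK: "finite (EK j)" if "j \<in> J" for j using EKsub[OF that] finEG by (rule finite_subset)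
  have cEK: "card (EK j) = card EH" if "j \<in> J" for j
    unfolding EK_def using copy_card_edges[OF cp[OF that] gH] .
  have R: "card (acyclic_orientations EG) ^ k \<le> card (acyclic_orientations EH) ^ m"
  proof -
    define U where "U = {p. {fst p, snd p} \<in> EG}"
    define A where "A j = {p. {fst p, snd p} \<in> EK j}" for j
    have finVG: "finite VG" using gG unfolding graph_def by simp
    have "U \<subseteq> VG \<times> VG"
    proof
      fix p assume "p \<in> U"
      then have "{fst p, snd p} \<subseteq> VG" unfolding U_def using graph_edges_sub[OF gG] by blast
      then show "p \<in> VG \<times> VG" by (cases p) simp
    qed
    then have finU: "finite U" using finVG by (meson finite_SigmaI finite_subset)
    have cntA: "\<forall>p\<in>U. card {j\<in>J. p \<in> A j} = k"
      using cnt unfolding U_def A_def by simp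
    have "card (acyclic_orientations EG) ^ k \<le> card (acyclic_orientations EH) ^ card J"
    proof (rule shearer_bound[OF finU finJ _ cntA k0])
      show "acyclic_orientations EG \<subseteq> Pow U"
        unfolding acyclic_orientations_def orientation_def U_def by auto
      show "\<forall>j\<in>J. card ((\<lambda>X. X \<inter> A j) ` acyclic_orientations EG) \<le> card (acyclic_orientations EH)"
      proof
        fix j assume j: "j \<in> J"
        have "(\<lambda>X. X \<inter> A j) ` acyclic_orientations EG \<subseteq> acyclic_orientations (EK j)"
        proof
          fix Y assume "Y \<in> (\<lambda>X. X \<inter> A j) ` acyclic_orientations EG"
          then obtain D where D: "D \<in> acyclic_orientations EG" "Y = D \<inter> A j" by blast
          have or: "orientation EG D" and ac: "\<forall>x. (x, x) \<notin> D\<^sup>+"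
            using D(1) unfolding acyclic_orientations_def by auto
          have o2: "(u, v) \<in> Y \<longleftrightarrow> (v, u) \<notin> Y" if "{u, v} \<in> EK j" "u \<noteq> v" for u v
          proof -
            have "{u, v} \<in> EG" using that EKsub[OF j] by blast
            then have "(u, v) \<in> D \<longleftrightarrow> (v, u) \<notin> D" using or that(2) unfolding orientation_def by blast
            moreover have "(u, v) \<in> A j" "(v, u) \<in> A j" using that(1) unfolding A_def
              by (simp_all add: insert_commute)
            ultimately show ?thesis using D(2) by blast
          qed
          have "orientation (EK j) Y" unfolding orientation_def
          proof (intro conjI allI impI)
            show "\<forall>(u, v)\<in>Y. {u, v} \<in> EK j" using D(2) unfolding A_def by auto
          next
            fix u v assume "{u, v} \<in> EK j" "u \<noteq> v"
            then show "(u, v) \<in> Y \<longleftrightarrow> (v, u) \<notin> Y" by (rule o2)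
          qed
          moreover have "\<forall>x. (x, x) \<notin> Y\<^sup>+"
          proof (intro allI notI)
            fix x assume "(x, x) \<in> Y\<^sup>+"
            moreover have "Y \<subseteq> D" using D(2) by auto
            ultimately have "(x, x) \<in> D\<^sup>+" by (rule trancl_mono)
            then show False using ac by blast
          qed
          ultimately show "Y \<in> acyclic_orientations (EK j)" unfolding acyclic_orientations_def by simp
        qed
        moreover have "finite (acyclic_orientations (EK j))" by (rule fin_ao[OF gK[OF j]])
        ultimately have "card ((\<lambda>X. X \<inter> A j) ` acyclic_orientations EG) \<le> card (acyclic_orientations (EK j))"
          by (rule card_mono[rotated])
        also have "\<dots> \<le> card (acyclic_orientations EH)"
          unfolding EK_def by (rule copy_counts(3)[OF cp[OF j] gH])
        finally show "card ((\<lambda>X. X \<inter> A j) ` acyclic_orientations EG) \<le> card (acyclic_orientations EH)" .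
      qed
    qed
    then show ?thesis using cJ by simp
  qed
  show ?thesis using R by (simp add: m_def)
qed

theorem proposition5p3:
  fixes VG :: "'b set" and EG :: "'b set set" and VH :: "'a set" and EH :: "'a set set"
  assumes "graph VG EG" and "graph VH EH"
    and "frac_edge_tiles VH EH VG EG"
  shows "(real (card (acyclic_orientations EG)) powr (1 / real (card EG))
           \<le> real (card (acyclic_orientations EH)) powr (1 / real (card EH))) \<and>
         (real (card (forests EG)) powr (1 / real (card EG))
           \<le> real (card (forests EH)) powr (1 / real (card EH))) \<and>
         (real (card (matchings EG)) powr (1 / real (card EG))
           \<le> real (card (matchings EH)) powr (1 / real (card EH)))"
proof -
  note gG = assms(1) and gH = assms(2)
  obtain Ks k where copies: "\<forall>K\<in>set Ks. is_copy VH EH VG EG K" and k0: "k > 0"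
    and cnt0: "\<forall>e\<in>EG. length (filter (\<lambda>K. e \<in> snd K) Ks) = k"
    using assms(3) unfolding frac_edge_tiles_def by blast
  note dc = tile_dc[OF gG gH copies k0 cnt0]
  note mG = tile_m[OF gG gH copies k0 cnt0]
  note fG = tile_f[OF gG gH copies k0 cnt0]
  note aG = tile_a[OF gG gH copies k0 cnt0]
  have finEH: "finite EH" using graph_finite_E[OF gH] .
  have b1: "card (matchings EH) \<ge> 1"
  proof -
    have "matchings EH \<subseteq> Pow EH" unfolding matchings_def by auto
    then have "finite (matchings EH)" using finEH by (meson finite_Pow_iff finite_subset)
    moreover have "{} \<in> matchings EH" unfolding matchings_def by auto
    ultimately show ?thesis by (metis One_nat_def Suc_leI card_gt_0_iff empty_iff)
  qed
  have b2: "card (forests EH) \<ge> 1"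
  proof -
    have "forests EH \<subseteq> Pow EH" unfolding forests_def by auto
    then have "finite (forests EH)" using finEH by (meson finite_Pow_iff finite_subset)
    moreover have "{} \<in> forests EH" unfolding forests_def has_cycle_def
      by (auto intro!: exI[of _ 0])
    ultimately show ?thesis by (metis One_nat_def Suc_leI card_gt_0_iff empty_iff)
  qed
  have b3: "card (acyclic_orientations EH) \<ge> 1"
    using fin_ao[OF gH] ao_exists[OF gH] by (simp add: Suc_le_eq card_gt_0_iff)
  show ?thesis
    using final_ineq[OF k0 aG dc b3] final_ineq[OF k0 fG dc b2] final_ineq[OF k0 mG dc b1]
    by simp
qed

end
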